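(* Let $(M,g)$ be a $4$-dimensional $pp$-wave which is not locally conformally flat, with local form $g=2\,du\,dv+H(u,x_1,x_2)\,du^2+dx_1^2+dx_2^2$ and degenerate parallel line field $\mathcal D=\operatorname{span}\{\partial_v\}$. If $(M,g,f,\mu)$ is quasi-Einstein for some smooth $f$ and some real constant $\mu$ (arbitrary), then $df(\mathcal D)=0$, i.e. $\partial_v f=0$.
   Context: The structure $(M,g,f,\mu)$, with $f$ a smooth function and $\mu$ a real constant, is called quasi-Einstein if there is a smooth function $\lambda$ with $\operatorname{Hes}_f+\rho-\mu\, df\otimes df=\lambda g$, where $\rho$ is the Ricci tensor and $\operatorname{Hes}_f=\nabla df$ is the Hessian. Locally conformally flat means the Weyl tensor vanishes identically; not locally conformally flat means it does not vanish identically. *)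

theory Defs
  imports "HOL-Analysis.Analysis"
begin

text \<open>Local coordinate calculus on an open set of R^4. Points are vectors p :: real^4,
  coordinate index type 4. Coordinate order: index 1 = u, 2 = v, 3 = x1, 4 = x2.\<close>

definition pd :: "4 \<Rightarrow> (real^4 \<Rightarrow> real) \<Rightarrow> real^4 \<Rightarrow> real" where
  "pd i F p = deriv (\<lambda>t. F (p + t *\<^sub>R axis i 1)) 0"

definition iter_pd :: "4 list \<Rightarrow> (real^4 \<Rightarrow> real) \<Rightarrow> real^4 \<Rightarrow> real" where
  "iter_pd is F = foldr pd is F"

definition smooth_on :: "(real^4) set \<Rightarrow> (real^4 \<Rightarrow> real) \<Rightarrow> bool" where
  "smooth_on U F \<longleftrightarrow>
     (\<forall>is. continuous_on U (iter_pd is F) \<and>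
        (\<forall>i. \<forall>p\<in>U. (\<lambda>t. iter_pd is F (p + t *\<^sub>R axis i 1)) differentiable (at 0)))"

type_synonym metric = "4 \<Rightarrow> 4 \<Rightarrow> real^4 \<Rightarrow> real"

definition ginv :: "metric \<Rightarrow> 4 \<Rightarrow> 4 \<Rightarrow> real^4 \<Rightarrow> real" where
  "ginv g k l p = matrix_inv (\<chi> i j. g i j p) $ k $ l"

definition chr :: "metric \<Rightarrow> 4 \<Rightarrow> 4 \<Rightarrow> 4 \<Rightarrow> real^4 \<Rightarrow> real" where
  "chr g k i j p = (1/2) * (\<Sum>l\<in>UNIV. ginv g k l p *
      (pd i (g j l) p + pd j (g i l) p - pd l (g i j) p))"

text \<open>R^l_{ijk}: components of R(d_i,d_j)d_k = nabla_i nabla_j d_k - nabla_j nabla_i d_k.\<close>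
definition riem :: "metric \<Rightarrow> 4 \<Rightarrow> 4 \<Rightarrow> 4 \<Rightarrow> 4 \<Rightarrow> real^4 \<Rightarrow> real" where
  "riem g l i j k p = pd i (chr g l j k) p - pd j (chr g l i k) p
     + (\<Sum>m\<in>UNIV. chr g m j k p * chr g l i m p - chr g m i k p * chr g l j m p)"

definition rm :: "metric \<Rightarrow> 4 \<Rightarrow> 4 \<Rightarrow> 4 \<Rightarrow> 4 \<Rightarrow> real^4 \<Rightarrow> real" where
  "rm g i j k l p = (\<Sum>m\<in>UNIV. g l m p * riem g m i j k p)"

definition ricci :: "metric \<Rightarrow> 4 \<Rightarrow> 4 \<Rightarrow> real^4 \<Rightarrow> real" where
  "ricci g j k p = (\<Sum>i\<in>UNIV. riem g i i j k p)"

definition scal :: "metric \<Rightarrow> real^4 \<Rightarrow> real" where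
  "scal g p = (\<Sum>j\<in>UNIV. \<Sum>k\<in>UNIV. ginv g j k p * ricci g j k p)"

text \<open>Weyl tensor in dimension n = 4.\<close>
definition weyl :: "metric \<Rightarrow> 4 \<Rightarrow> 4 \<Rightarrow> 4 \<Rightarrow> 4 \<Rightarrow> real^4 \<Rightarrow> real" where
  "weyl g i j k l p = rm g i j k l p
     - (1/2) * (ricci g j k p * g i l p + ricci g i l p * g j k p
                - ricci g i k p * g j l p - ricci g j l p * g i k p)
     + (scal g p / 6) * (g j k p * g i l p - g i k p * g j l p)"

definition hes :: "metric \<Rightarrow> (real^4 \<Rightarrow> real) \<Rightarrow> 4 \<Rightarrow> 4 \<Rightarrow> real^4 \<Rightarrow> real" where
  "hes g f i j p = pd i (pd j f) p - (\<Sum>k\<in>UNIV. chr g k i j p * pd k f p)"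

definition quasi_einstein :: "(real^4) set \<Rightarrow> metric \<Rightarrow> (real^4 \<Rightarrow> real) \<Rightarrow> real \<Rightarrow> bool" where
  "quasi_einstein U g f \<mu> \<longleftrightarrow>
     (\<exists>lam. smooth_on U lam \<and>
        (\<forall>p\<in>U. \<forall>i j. hes g f i j p + ricci g i j p - \<mu> * pd i f p * pd j f p = lam p * g i j p))"

definition ppwave :: "(real \<Rightarrow> real \<Rightarrow> real \<Rightarrow> real) \<Rightarrow> metric" where
  "ppwave H i j p =
     (if i = 1 \<and> j = 1 then H (p$1) (p$3) (p$4)
      else if (i = 1 \<and> j = 2) \<or> (i = 2 \<and> j = 1) \<or> (i = 3 \<and> j = 3) \<or> (i = 4 \<and> j = 4) then 1
      else 0)"

end

theory Submission
  imports Defs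
begin

definition HP :: "4 \<Rightarrow> (real^4 \<Rightarrow> real) \<Rightarrow> real^4 \<Rightarrow> real \<Rightarrow> bool" where
  "HP i F p D \<longleftrightarrow> ((\<lambda>t. F (p + t *\<^sub>R axis i 1)) has_real_derivative D) (at 0)"

lemma HP_pd: "HP i F p D \<Longrightarrow> pd i F p = D"
  unfolding HP_def pd_def by (rule DERIV_imp_deriv)

lemma diff_HP: "(\<lambda>t. F (p + t *\<^sub>R axis i 1)) differentiable (at 0) \<Longrightarrow> HP i F p (pd i F p)"
  unfolding HP_def pd_def by (simp add: DERIV_deriv_iff_real_differentiable)

lemma HP_add: "HP i F p D \<Longrightarrow> HP i G p E \<Longrightarrow> HP i (\<lambda>q. F q + G q) p (D + E)"
  unfolding HP_def by (rule derivative_intros)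

lemma HP_mult: "HP i F p D \<Longrightarrow> HP i G p E \<Longrightarrow> HP i (\<lambda>q. F q * G q) p (D * G p + F p * E)"
  unfolding HP_def by (auto intro!: derivative_eq_intros)

lemma HP_const: "HP i (\<lambda>q. c) p 0"
  unfolding HP_def by simp

lemma HP_exp: "HP i F p D \<Longrightarrow> HP i (\<lambda>q. exp (F q)) p (exp (F p) * D)"
  unfolding HP_def by (auto intro!: derivative_eq_intros)

lemma HP_shift: "HP i F (p + s *\<^sub>R axis i 1) D \<Longrightarrow> ((\<lambda>t. F (p + t *\<^sub>R axis i 1)) has_real_derivative D) (at s)"
proof -
  assume "HP i F (p + s *\<^sub>R axis i 1) D"
  then have "((\<lambda>x. F (p + (x + s) *\<^sub>R axis i 1)) has_real_derivative D) (at 0)"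
    unfolding HP_def by (simp add: algebra_simps)
  then show ?thesis using DERIV_shift[of "\<lambda>t. F (p + t *\<^sub>R axis i 1)" D 0 s] by simp
qed

lemma open_line: "open U \<Longrightarrow> open {t::real. p + t *\<^sub>R (v::real^4) \<in> U}"
proof -
  assume "open U"
  have "continuous_on UNIV (\<lambda>t::real. p + t *\<^sub>R v)" by (intro continuous_intros)
  then have "open ((\<lambda>t::real. p + t *\<^sub>R v) -` U)" using open_vimage \<open>open U\<close> by blast
  then show ?thesis by (simp add: vimage_def)
qed

lemma HP_local: assumes "open U" "p \<in> U" "\<And>q. q \<in> U \<Longrightarrow> F q = G q" "HP i F p D"
  shows "HP i G p D"
  unfolding HP_def
proof (rule has_field_derivative_transform_within_open[where S="{t. p + t *\<^sub>R axis i 1 \<in> U}"])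
  show "((\<lambda>t. F (p + t *\<^sub>R axis i 1)) has_real_derivative D) (at 0)" using assms(4) unfolding HP_def .
  show "open {t. p + t *\<^sub>R axis i 1 \<in> U}" using open_line[OF assms(1)] .
  show "0 \<in> {t. p + t *\<^sub>R axis i 1 \<in> U}" using assms(2) by simp
  show "\<And>x. x \<in> {t. p + t *\<^sub>R axis i 1 \<in> U} \<Longrightarrow> F (p + x *\<^sub>R axis i 1) = G (p + x *\<^sub>R axis i 1)"
    using assms(3) by blast
qed

lemma pd_local: fixes i :: 4 assumes "open U" "p \<in> U" "\<And>q. q \<in> U \<Longrightarrow> F q = G q"
  shows "pd i F p = pd i G p"
proof -
  have "\<And>D. HP i F p D \<longleftrightarrow> HP i G p D"
    using HP_local[OF assms(1,2)] assms(3) by metis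
  then show ?thesis unfolding pd_def deriv_def HP_def[symmetric] by simp
qed

lemma diff_local: fixes i :: 4 and F G :: "real^4 \<Rightarrow> real" assumes "open U" "p \<in> U" "\<And>q. q \<in> U \<Longrightarrow> F q = G q"
   "(\<lambda>t. F (p + t *\<^sub>R axis i 1)) differentiable (at 0)"
 shows "(\<lambda>t. G (p + t *\<^sub>R axis i 1)) differentiable (at 0)"
proof -
  have "HP i F p (pd i F p)" using diff_HP assms(4) by blast
  then have "HP i G p (pd i F p)" using HP_local assms by blast
  then show ?thesis unfolding HP_def using real_differentiable_def by blast
qed

lemma iter_pd_Cons: "iter_pd (i # is) F = pd i (iter_pd is F)"
  by (simp add: iter_pd_def)

lemma iter_pd_Nil: "iter_pd [] F = F"
  by (simp add: iter_pd_def)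

lemma iter_pd_snoc: "iter_pd is (pd i F) = iter_pd (is @ [i]) F"
  by (simp add: iter_pd_def)

lemma smooth_pd: "smooth_on U F \<Longrightarrow> smooth_on U (pd i F)"
  unfolding smooth_on_def iter_pd_snoc by blast

lemma smooth_HP: "smooth_on U F \<Longrightarrow> p \<in> U \<Longrightarrow> HP i F p (pd i F p)"
  unfolding smooth_on_def using diff_HP[of F p i] iter_pd_Nil[of F] by metis

lemma smooth_cont: "smooth_on U F \<Longrightarrow> continuous_on U F"
  unfolding smooth_on_def using iter_pd_Nil[of F] by metis

lemma smooth_coind:
  assumes "open U"
    and T: "\<And>F. F \<in> T \<Longrightarrow> continuous_on U F \<and> (\<forall>i. \<forall>p\<in>U. HP i F p (pd i F p))
              \<and> (\<forall>i. \<exists>G\<in>T. \<forall>p\<in>U. pd i F p = G p)"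
    and "F \<in> T"
  shows "smooth_on U F"
proof -
  have claim: "\<exists>G\<in>T. \<forall>p\<in>U. iter_pd is F p = G p" for "is"
  proof (induction "is")
    case Nil then show ?case using \<open>F \<in> T\<close> by (auto simp: iter_pd_Nil)
  next
    case (Cons i "is")
    then obtain G where G: "G \<in> T" "\<forall>p\<in>U. iter_pd is F p = G p" by blast
    then obtain G' where G': "G' \<in> T" "\<forall>p\<in>U. pd i G p = G' p" using T by blast
    have "\<forall>p\<in>U. iter_pd (i # is) F p = G' p"
      using G G' pd_local[OF \<open>open U\<close>, of _ "iter_pd is F" G i] by (simp add: iter_pd_Cons)
    then show ?case using G' by blast
  qed
  show ?thesis unfolding smooth_on_def
  proof (intro allI conjI ballI)
    fix "is" i p
    obtain G where G: "G \<in> T" "\<forall>p\<in>U. iter_pd is F p = G p" using claim by blast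
    show "continuous_on U (iter_pd is F)"
      using T[OF G(1)] G(2) continuous_on_cong by fastforce
    assume "p \<in> U"
    have "HP i G p (pd i G p)" using T[OF G(1)] \<open>p \<in> U\<close> by blast
    then have "(\<lambda>t. G (p + t *\<^sub>R axis i 1)) differentiable (at 0)"
      unfolding HP_def using real_differentiable_def by blast
    then show "(\<lambda>t. iter_pd is F (p + t *\<^sub>R axis i 1)) differentiable (at 0)"
      using diff_local[OF \<open>open U\<close> \<open>p \<in> U\<close>, of G "iter_pd is F"] G(2) by metis
  qed
qed

inductive_set sm :: "(real^4) set \<Rightarrow> (real^4 \<Rightarrow> real) set" for U where
  sm_base: "smooth_on U F \<Longrightarrow> F \<in> sm U"
| sm_const: "(\<lambda>p. c) \<in> sm U"
| sm_add: "F \<in> sm U \<Longrightarrow> G \<in> sm U \<Longrightarrow> (\<lambda>p. F p + G p) \<in> sm U"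
| sm_mult: "F \<in> sm U \<Longrightarrow> G \<in> sm U \<Longrightarrow> (\<lambda>p. F p * G p) \<in> sm U"
| sm_exp: "F \<in> sm U \<Longrightarrow> (\<lambda>p. exp (F p)) \<in> sm U"

lemma sm_props:
  assumes "F \<in> sm U"
  shows "continuous_on U F \<and> (\<forall>i. \<forall>p\<in>U. HP i F p (pd i F p))
              \<and> (\<forall>i. \<exists>G\<in>sm U. \<forall>p\<in>U. pd i F p = G p)"
  using assms
proof (induction rule: sm.induct)
  case (sm_base F)
  have "\<exists>G\<in>sm U. \<forall>p\<in>U. pd i F p = G p" for i
    using sm.sm_base[OF smooth_pd[OF sm_base]] by blast
  moreover have "continuous_on U F" using smooth_cont[OF sm_base] .
  moreover have "\<forall>i. \<forall>p\<in>U. HP i F p (pd i F p)" using smooth_HP[OF sm_base] by blast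
  ultimately show ?case by blast
next
  case (sm_const c)
  have "pd i (\<lambda>p. c) p = 0" for i p using HP_pd[OF HP_const] by blast
  then have hp: "HP i (\<lambda>p. c) p (pd i (\<lambda>p. c) p)" for i p using HP_const by simp
  have "\<exists>G\<in>sm U. \<forall>p\<in>U. pd i (\<lambda>p. c) p = G p" for i
    using sm.sm_const[of 0 U] \<open>\<And>i p. pd i (\<lambda>p. c) p = 0\<close> by (intro bexI[of _ "\<lambda>p. 0"]) auto
  then show ?case using hp by auto
next
  case (sm_add F G)
  note F = sm_add.IH(1) and G = sm_add.IH(2)
  have Fc: "continuous_on U F" and Fh: "\<And>i p. p \<in> U \<Longrightarrow> HP i F p (pd i F p)" using F by blast+
  have Gc: "continuous_on U G" and Gh: "\<And>i p. p \<in> U \<Longrightarrow> HP i G p (pd i G p)" using G by blast+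
  have hp: "HP i (\<lambda>p. F p + G p) p (pd i F p + pd i G p)" if "p \<in> U" for i p
    using Fh Gh that by (intro HP_add)
  have c1: "continuous_on U (\<lambda>p. F p + G p)" using Fc Gc by (intro continuous_intros)
  have c2: "\<forall>i. \<forall>p\<in>U. HP i (\<lambda>p. F p + G p) p (pd i (\<lambda>p. F p + G p) p)"
  proof (intro allI ballI)
    fix i p assume "p \<in> U"
    from hp[OF this, of i] show "HP i (\<lambda>p. F p + G p) p (pd i (\<lambda>p. F p + G p) p)"
      by (simp add: HP_pd[OF hp[OF \<open>p \<in> U\<close>]])
  qed
  have c3: "\<exists>Ga\<in>sm U. \<forall>p\<in>U. pd i (\<lambda>p. F p + G p) p = Ga p" for i
  proof -
    obtain F' where F': "F' \<in> sm U" "\<forall>p\<in>U. pd i F p = F' p" using F by blast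
    obtain G' where G': "G' \<in> sm U" "\<forall>p\<in>U. pd i G p = G' p" using G by blast
    have "\<forall>p\<in>U. pd i (\<lambda>p. F p + G p) p = F' p + G' p"
      using HP_pd[OF hp] F'(2) G'(2) by simp
    then show ?thesis by (intro bexI[OF _ sm.sm_add[OF F'(1) G'(1)]]) simp
  qed
  show ?case using c1 c2 c3 by blast
next
  case (sm_mult F G)
  note F = sm_mult.IH(1) and G = sm_mult.IH(2)
  have Fc: "continuous_on U F" and Fh: "\<And>i p. p \<in> U \<Longrightarrow> HP i F p (pd i F p)" using F by blast+
  have Gc: "continuous_on U G" and Gh: "\<And>i p. p \<in> U \<Longrightarrow> HP i G p (pd i G p)" using G by blast+
  have hp: "HP i (\<lambda>p. F p * G p) p (pd i F p * G p + F p * pd i G p)" if "p \<in> U" for i p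
    using Fh Gh that by (intro HP_mult)
  have c1: "continuous_on U (\<lambda>p. F p * G p)" using Fc Gc by (intro continuous_intros)
  have c2: "\<forall>i. \<forall>p\<in>U. HP i (\<lambda>p. F p * G p) p (pd i (\<lambda>p. F p * G p) p)"
  proof (intro allI ballI)
    fix i p assume "p \<in> U"
    from hp[OF this, of i] show "HP i (\<lambda>p. F p * G p) p (pd i (\<lambda>p. F p * G p) p)"
      by (simp add: HP_pd[OF hp[OF \<open>p \<in> U\<close>]])
  qed
  have c3: "\<exists>Ga\<in>sm U. \<forall>p\<in>U. pd i (\<lambda>p. F p * G p) p = Ga p" for i
  proof -
    obtain F' where F': "F' \<in> sm U" "\<forall>p\<in>U. pd i F p = F' p" using F by blast
    obtain G' where G': "G' \<in> sm U" "\<forall>p\<in>U. pd i G p = G' p" using G by blast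
    have "\<forall>p\<in>U. pd i (\<lambda>p. F p * G p) p = F' p * G p + F p * G' p"
      using HP_pd[OF hp] F'(2) G'(2) by simp
    then show ?thesis
      by (intro bexI[OF _ sm.sm_add[OF sm.sm_mult[OF F'(1) sm_mult.hyps(2)] sm.sm_mult[OF sm_mult.hyps(1) G'(1)]]]) simp
  qed
  show ?case using c1 c2 c3 by blast
next
  case (sm_exp F)
  note F = sm_exp.IH
  have Fc: "continuous_on U F" and Fh: "\<And>i p. p \<in> U \<Longrightarrow> HP i F p (pd i F p)" using F by blast+
  have hp: "HP i (\<lambda>p. exp (F p)) p (exp (F p) * pd i F p)" if "p \<in> U" for i p
    using Fh that by (intro HP_exp)
  have c1: "continuous_on U (\<lambda>p. exp (F p))" using Fc by (intro continuous_intros)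
  have c2: "\<forall>i. \<forall>p\<in>U. HP i (\<lambda>p. exp (F p)) p (pd i (\<lambda>p. exp (F p)) p)"
  proof (intro allI ballI)
    fix i p assume "p \<in> U"
    from hp[OF this, of i] show "HP i (\<lambda>p. exp (F p)) p (pd i (\<lambda>p. exp (F p)) p)"
      by (simp add: HP_pd[OF hp[OF \<open>p \<in> U\<close>]])
  qed
  have c3: "\<exists>Ga\<in>sm U. \<forall>p\<in>U. pd i (\<lambda>p. exp (F p)) p = Ga p" for i
  proof -
    obtain F' where F': "F' \<in> sm U" "\<forall>p\<in>U. pd i F p = F' p" using F by blast
    have "\<forall>p\<in>U. pd i (\<lambda>p. exp (F p)) p = exp (F p) * F' p"
      using HP_pd[OF hp] F'(2) by simp
    then show ?thesis
      by (intro bexI[OF _ sm.sm_mult[OF sm.sm_exp[OF sm_exp.hyps] F'(1)]]) simp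
  qed
  show ?case using c1 c2 c3 by blast
qed

lemma sm_smooth: "open U \<Longrightarrow> F \<in> sm U \<Longrightarrow> smooth_on U F"
  using smooth_coind[of U "sm U" F] sm_props by blast

definition Hf :: "(real \<Rightarrow> real \<Rightarrow> real \<Rightarrow> real) \<Rightarrow> real^4 \<Rightarrow> real" where
  "Hf H = (\<lambda>p. H (p$1) (p$3) (p$4))"

definition I2 :: "(real^4 \<Rightarrow> real) \<Rightarrow> bool" where
  "I2 G \<longleftrightarrow> (\<forall>p t. G (p + t *\<^sub>R axis 2 1) = G p)"

lemma I2_Hf: "I2 (Hf H)"
  unfolding I2_def Hf_def by (simp add: axis_def)

lemma I2_pd: assumes "I2 G" shows "I2 (pd i G)"
  unfolding I2_def
proof (intro allI)
  fix p t
  have "(\<lambda>s. G (p + t *\<^sub>R axis 2 1 + s *\<^sub>R axis i 1)) = (\<lambda>s. G (p + s *\<^sub>R axis i 1))"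
  proof
    fix s
    have "p + t *\<^sub>R axis 2 1 + s *\<^sub>R axis i 1 = (p + s *\<^sub>R axis i 1) + t *\<^sub>R axis 2 1"
      by (simp add: algebra_simps)
    then show "G (p + t *\<^sub>R axis 2 1 + s *\<^sub>R axis i 1) = G (p + s *\<^sub>R axis i 1)"
      using assms unfolding I2_def by metis
  qed
  then show "pd i G (p + t *\<^sub>R axis 2 1) = pd i G p" unfolding pd_def by simp
qed

lemma I2_pd2: assumes "I2 G" shows "pd 2 G p = 0"
  using assms unfolding I2_def pd_def by simp

lemma pd_const: "pd i (\<lambda>p. c) p = 0"
  unfolding pd_def by simp

lemma pd_pp: "pd a (ppwave H j l) p = (if j = 1 \<and> l = 1 then pd a (Hf H) p else 0)"
proof -
  have "ppwave H j l = (if j = 1 \<and> l = 1 then Hf H else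
     (\<lambda>p. if (j = 1 \<and> l = 2) \<or> (j = 2 \<and> l = 1) \<or> (j = 3 \<and> l = 3) \<or> (j = 4 \<and> l = 4) then 1 else 0))"
    by (auto simp: ppwave_def Hf_def fun_eq_iff)
  then show ?thesis by (simp add: pd_const)
qed

definition Gi :: "(real \<Rightarrow> real \<Rightarrow> real \<Rightarrow> real) \<Rightarrow> real^4 \<Rightarrow> real^4^4" where
 "Gi H p = (\<chi> k l. if (k=1\<and>l=2) \<or> (k=2\<and>l=1) \<or> (k=3\<and>l=3) \<or> (k=4\<and>l=4) then 1
     else if k=2 \<and> l=2 then - H (p$1) (p$3) (p$4) else 0)"

lemma inv_unique: fixes A :: "real^4^4" assumes "A ** B = mat 1" "B ** A = mat 1" shows "matrix_inv A = B"
proof -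
  have ex: "\<exists>A'. A ** A' = mat 1 \<and> A' ** A = mat 1" using assms by blast
  define C where "C = matrix_inv A"
  have C: "A ** C = mat 1 \<and> C ** A = mat 1" unfolding C_def matrix_inv_def using someI_ex[OF ex] by blast
  have "C = C ** (A ** B)" using assms by simp
  also have "\<dots> = (C ** A) ** B" by (simp add: matrix_mul_assoc)
  also have "\<dots> = B" using C by simp
  finally show ?thesis unfolding C_def .
qed

lemma ginv_pp: "ginv (ppwave H) k l p = Gi H p $ k $ l"
proof -
  have "matrix_inv (\<chi> i j. ppwave H i j p) = Gi H p"
    apply (rule inv_unique)
     apply (simp_all add: vec_eq_iff matrix_matrix_mult_def sum_4 forall_4 mat_def ppwave_def Gi_def)
    done
  then show ?thesis by (simp add: ginv_def)
qed

definition cf :: "4 \<Rightarrow> 4 \<Rightarrow> 4 \<Rightarrow> 4 \<Rightarrow> real" where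
  "cf k i j m = (if k=2 \<and> i=1 \<and> j=1 \<and> m=1 then 1/2
     else if k=3 \<and> i=1 \<and> j=1 \<and> m=3 then -1/2
     else if k=4 \<and> i=1 \<and> j=1 \<and> m=4 then -1/2
     else if k=2 \<and> ((i=1 \<and> j=3) \<or> (i=3 \<and> j=1)) \<and> m=3 then 1/2
     else if k=2 \<and> ((i=1 \<and> j=4) \<or> (i=4 \<and> j=1)) \<and> m=4 then 1/2 else 0)"

lemma chr_pp: "chr (ppwave H) k i j p = (\<Sum>m\<in>UNIV. cf k i j m * pd m (Hf H) p)"
proof -
  have z: "pd 2 (Hf H) p = 0" using I2_pd2[OF I2_Hf] .
  show ?thesis
    unfolding chr_def ginv_pp pd_pp
    using exhaust_4[of k] exhaust_4[of i] exhaust_4[of j]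
    by (auto simp: Gi_def sum_4 cf_def z)
qed

lemma HP_lin: assumes "\<And>m. HP a (G m) p (D m)"
  shows "HP a (\<lambda>q. \<Sum>m\<in>UNIV. c m * G m q) p (\<Sum>m\<in>UNIV. c m * D m)"
  using assms unfolding HP_def sum_4
  by (auto intro!: derivative_eq_intros simp: mult.commute)

definition RI :: "(4 \<Rightarrow> real) \<Rightarrow> (4 \<Rightarrow> 4 \<Rightarrow> real) \<Rightarrow> 4 \<Rightarrow> 4 \<Rightarrow> 4 \<Rightarrow> 4 \<Rightarrow> real" where
  "RI h H2 l i j k = (\<Sum>m\<in>UNIV. cf l j k m * H2 i m) - (\<Sum>m\<in>UNIV. cf l i k m * H2 j m)
     + (\<Sum>n\<in>UNIV. (\<Sum>m\<in>UNIV. cf n j k m * h m) * (\<Sum>m\<in>UNIV. cf l i n m * h m)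
                 - (\<Sum>m\<in>UNIV. cf n i k m * h m) * (\<Sum>m\<in>UNIV. cf l j n m * h m))"

lemma riem_pp:
  assumes "\<And>a m. HP a (pd m (Hf H)) p (pd a (pd m (Hf H)) p)"
  shows "riem (ppwave H) l i j k p = RI (\<lambda>m. pd m (Hf H) p) (\<lambda>a m. pd a (pd m (Hf H)) p) l i j k"
proof -
  have cfun: "chr (ppwave H) l j k = (\<lambda>q. \<Sum>m\<in>UNIV. cf l j k m * pd m (Hf H) q)" for l j k
    by (simp add: fun_eq_iff chr_pp)
  have d: "pd a (chr (ppwave H) l j k) p = (\<Sum>m\<in>UNIV. cf l j k m * pd a (pd m (Hf H)) p)" for a l j k
    unfolding cfun by (rule HP_pd[OF HP_lin[OF assms]])
  show ?thesis unfolding riem_def d RI_def chr_pp by simp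
qed

definition gE :: "real \<Rightarrow> 4 \<Rightarrow> 4 \<Rightarrow> real" where
  "gE Hv i j = (if i = 1 \<and> j = 1 then Hv
      else if (i = 1 \<and> j = 2) \<or> (i = 2 \<and> j = 1) \<or> (i = 3 \<and> j = 3) \<or> (i = 4 \<and> j = 4) then 1
      else 0)"

definition giE :: "real \<Rightarrow> 4 \<Rightarrow> 4 \<Rightarrow> real" where
  "giE Hv k l = (if (k=1\<and>l=2) \<or> (k=2\<and>l=1) \<or> (k=3\<and>l=3) \<or> (k=4\<and>l=4) then 1
     else if k=2 \<and> l=2 then - Hv else 0)"

definition ricE where "ricE h H2 j k = (\<Sum>i\<in>UNIV. RI h H2 i i j k)"
definition rmE where "rmE Hv h H2 i j k l = (\<Sum>m\<in>UNIV. gE Hv l m * RI h H2 m i j k)"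
definition scE where "scE Hv h H2 = (\<Sum>j\<in>UNIV. \<Sum>k\<in>UNIV. giE Hv j k * ricE h H2 j k)"
definition weE where "weE Hv h H2 i j k l = rmE Hv h H2 i j k l
     - (1/2) * (ricE h H2 j k * gE Hv i l + ricE h H2 i l * gE Hv j k
                - ricE h H2 i k * gE Hv j l - ricE h H2 j l * gE Hv i k)
     + (scE Hv h H2 / 6) * (gE Hv j k * gE Hv i l - gE Hv i k * gE Hv j l)"

lemma weyl_pp:
  assumes "\<And>a m. HP a (pd m (Hf H)) p (pd a (pd m (Hf H)) p)"
  shows "weyl (ppwave H) i j k l p = weE (Hf H p) (\<lambda>m. pd m (Hf H) p) (\<lambda>a m. pd a (pd m (Hf H)) p) i j k l"
proof -
  have g: "ppwave H a b p = gE (Hf H p) a b" for a b by (simp add: ppwave_def gE_def Hf_def)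
  have gi: "ginv (ppwave H) a b p = giE (Hf H p) a b" for a b by (simp add: ginv_pp Gi_def giE_def Hf_def)
  show ?thesis
    unfolding weyl_def weE_def rm_def rmE_def ricci_def ricE_def scal_def scE_def g gi riem_pp[OF assms]
    by simp
qed

lemma RI_simp: "RI h H2 l i j k = (\<Sum>m\<in>UNIV. cf l j k m * H2 i m) - (\<Sum>m\<in>UNIV. cf l i k m * H2 j m)"
proof -
  have "(\<Sum>n\<in>UNIV. (\<Sum>m\<in>UNIV. cf n j k m * h m) * (\<Sum>m\<in>UNIV. cf l i n m * h m)
                 - (\<Sum>m\<in>UNIV. cf n i k m * h m) * (\<Sum>m\<in>UNIV. cf l j n m * h m)) = 0"
    using exhaust_4[of i] exhaust_4[of j] exhaust_4[of k] exhaust_4[of l]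
    by (auto simp: sum_4 cf_def)
  then show ?thesis unfolding RI_def by simp
qed

lemma ricE_val: assumes "\<And>m. H2 2 m = 0"
  shows "ricE h H2 j k = (if j = 1 \<and> k = 1 then - (H2 3 3 + H2 4 4) / 2 else 0)"
  using exhaust_4[of j] exhaust_4[of k] assms
  by (auto simp: ricE_def RI_simp sum_4 cf_def)

lemma scE_val: assumes "\<And>m. H2 2 m = 0" shows "scE Hv h H2 = 0"
  by (simp add: scE_def ricE_val[of H2, OF assms] sum_4 giE_def)

lemma weE_zero:
  assumes "\<And>m. H2 2 m = 0" "\<And>a b. H2 a b = H2 b a" "H2 3 3 = H2 4 4" "H2 3 4 = 0"
  shows "weE Hv h H2 i j k l = 0"
proof -
  have s: "H2 m 2 = 0" for m using assms(1,2) by metis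
  have "H2 4 3 = 0" using assms(2,4) by metis
  moreover have "H2 3 1 = H2 1 3" "H2 4 1 = H2 1 4" using assms(2) by metis+
  ultimately show ?thesis
    using exhaust_4[of i] exhaust_4[of j] exhaust_4[of k] exhaust_4[of l] assms(1,3,4) s
    by (auto simp: weE_def rmE_def ricE_val[of H2, OF assms(1)] scE_val[of H2, OF assms(1)] RI_simp gE_def sum_4 cf_def algebra_simps)
qed

lemma HP_diff: "HP i F p D \<Longrightarrow> HP i G p E \<Longrightarrow> HP i (\<lambda>q. F q - G q) p (D - E)"
  unfolding HP_def by (rule derivative_intros)

lemma HP_transl: "HP i F (z + c) D \<Longrightarrow> HP i (\<lambda>q. F (q + c)) z D"
  unfolding HP_def by (simp add: algebra_simps)

lemma mvt_line:
  assumes "0 < h" "\<And>s. 0 \<le> s \<Longrightarrow> s \<le> h \<Longrightarrow> HP i G (q + s *\<^sub>R axis i 1) (G' s)"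
  shows "\<exists>x. 0 < x \<and> x < h \<and> G (q + h *\<^sub>R axis i 1) - G q = h * G' x"
proof -
  have "\<exists>z. 0 < z \<and> z < h \<and> (\<lambda>s. G (q + s *\<^sub>R axis i 1)) h - (\<lambda>s. G (q + s *\<^sub>R axis i 1)) 0 = (h - 0) * G' z"
    by (rule MVT2[OF assms(1)]) (use assms(2) HP_shift in blast)
  then show ?thesis by simp
qed

lemma norm_ax: "norm (x *\<^sub>R axis i (1::real) + y *\<^sub>R axis j 1 :: real^4) \<le> \<bar>x\<bar> + \<bar>y\<bar>"
proof -
  have "norm (x *\<^sub>R axis i (1::real) + y *\<^sub>R axis j 1 :: real^4) \<le> norm (x *\<^sub>R axis i (1::real) :: real^4) + norm (y *\<^sub>R axis j (1::real) :: real^4)"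
    by (rule norm_triangle_ineq)
  also have "\<dots> = \<bar>x\<bar> + \<bar>y\<bar>" by simp
  finally show ?thesis .
qed

lemma double_mvt:
  assumes "open U" "smooth_on U F" "ball p r \<subseteq> U" "0 < h" "h < r / 2"
  shows "\<exists>x y. 0 < x \<and> x < h \<and> 0 < y \<and> y < h \<and>
    F (p + h *\<^sub>R axis i 1 + h *\<^sub>R axis j 1) - F (p + h *\<^sub>R axis i 1) - F (p + h *\<^sub>R axis j 1) + F p
      = h * h * pd j (pd i F) (p + x *\<^sub>R axis i 1 + y *\<^sub>R axis j 1)"
proof -
  have inU: "p + x *\<^sub>R axis i 1 + y *\<^sub>R axis j 1 \<in> U" if "\<bar>x\<bar> \<le> h" "\<bar>y\<bar> \<le> h" for x y
  proof -
    have "norm (x *\<^sub>R axis i (1::real) + y *\<^sub>R axis j 1 :: real^4) < r"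
      using norm_ax[of x i y j] that assms(5) by linarith
    moreover have "dist p (p + (x *\<^sub>R axis i 1 + y *\<^sub>R axis j 1)) = norm (x *\<^sub>R axis i (1::real) + y *\<^sub>R axis j 1 :: real^4)"
      by (metis add_diff_cancel_left' dist_commute dist_norm)
    ultimately have "p + x *\<^sub>R axis i 1 + y *\<^sub>R axis j 1 \<in> ball p r"
      by (simp add: add.assoc)
    then show ?thesis using assms(3) by blast
  qed
  have hF: "HP k F q (pd k F q)" if "q \<in> U" for k q using smooth_HP[OF assms(2) that] .
  have hFi: "HP k (pd i F) q (pd k (pd i F) q)" if "q \<in> U" for k q
    using smooth_HP[OF smooth_pd[OF assms(2)] that] .
  define G1 where "G1 = (\<lambda>z. F (z + h *\<^sub>R axis j 1) - F z)"
  have "HP i G1 (p + s *\<^sub>R axis i 1) (pd i F (p + s *\<^sub>R axis i 1 + h *\<^sub>R axis j 1) - pd i F (p + s *\<^sub>R axis i 1))"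
    if "0 \<le> s" "s \<le> h" for s
  proof -
    have a: "p + s *\<^sub>R axis i 1 + h *\<^sub>R axis j 1 \<in> U" using inU[of s h] that \<open>0 < h\<close> by simp
    have b: "p + s *\<^sub>R axis i 1 \<in> U" using inU[of s 0] that \<open>0 < h\<close> by simp
    show ?thesis unfolding G1_def
      by (rule HP_diff[OF HP_transl[OF hF[OF a]] hF[OF b]])
  qed
  from mvt_line[OF assms(4), of i G1 p, OF this]
  obtain x where x: "0 < x" "x < h"
    "G1 (p + h *\<^sub>R axis i 1) - G1 p = h * (pd i F (p + x *\<^sub>R axis i 1 + h *\<^sub>R axis j 1) - pd i F (p + x *\<^sub>R axis i 1))"
    by blast
  have "HP j (pd i F) (p + x *\<^sub>R axis i 1 + s *\<^sub>R axis j 1) (pd j (pd i F) (p + x *\<^sub>R axis i 1 + s *\<^sub>R axis j 1))"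
    if "0 \<le> s" "s \<le> h" for s
    using hFi inU[of x s] that x by simp
  from mvt_line[OF assms(4), of j "pd i F" "p + x *\<^sub>R axis i 1", OF this]
  obtain y where y: "0 < y" "y < h"
    "pd i F (p + x *\<^sub>R axis i 1 + h *\<^sub>R axis j 1) - pd i F (p + x *\<^sub>R axis i 1)
      = h * pd j (pd i F) (p + x *\<^sub>R axis i 1 + y *\<^sub>R axis j 1)"
    by blast
  show ?thesis
    using x y by (intro exI[of _ x] exI[of _ y]) (simp add: G1_def algebra_simps)
qed

lemma near_pt:
  fixes i j :: 4 and p :: "real^4"
  assumes "ball p r \<subseteq> U" "\<bar>x\<bar> + \<bar>y\<bar> < r"
  shows "p + x *\<^sub>R axis i 1 + y *\<^sub>R axis j 1 \<in> U"
    and "dist (p + x *\<^sub>R axis i 1 + y *\<^sub>R axis j 1) p \<le> \<bar>x\<bar> + \<bar>y\<bar>"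
proof -
  have d: "dist p (p + (x *\<^sub>R axis i 1 + y *\<^sub>R axis j 1)) = norm (x *\<^sub>R axis i (1::real) + y *\<^sub>R axis j 1 :: real^4)"
    by (metis add_diff_cancel_left' dist_commute dist_norm)
  then show "dist (p + x *\<^sub>R axis i 1 + y *\<^sub>R axis j 1) p \<le> \<bar>x\<bar> + \<bar>y\<bar>"
    using norm_ax[of x i y j] by (simp add: add.assoc dist_commute)
  then show "p + x *\<^sub>R axis i 1 + y *\<^sub>R axis j 1 \<in> U"
    using assms by (auto simp: dist_commute)
qed

lemma clairaut:
  assumes "open U" "smooth_on U F" "p \<in> U"
  shows "pd i (pd j F) p = pd j (pd i F) p"
proof (rule ccontr)
  assume ne: "pd i (pd j F) p \<noteq> pd j (pd i F) p"
  define A where "A = pd j (pd i F)"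
  define B where "B = pd i (pd j F)"
  define \<epsilon> where "\<epsilon> = \<bar>A p - B p\<bar> / 2"
  have e: "\<epsilon> > 0" using ne unfolding \<epsilon>_def A_def B_def by simp
  have cA: "continuous_on U A" unfolding A_def using smooth_cont[OF smooth_pd[OF smooth_pd[OF assms(2)]]] .
  have cB: "continuous_on U B" unfolding B_def using smooth_cont[OF smooth_pd[OF smooth_pd[OF assms(2)]]] .
  obtain dA where dA: "dA > 0" "\<And>q. q \<in> U \<Longrightarrow> dist q p < dA \<Longrightarrow> dist (A q) (A p) < \<epsilon>"
    using cA assms(3) e unfolding continuous_on_iff by metis
  obtain dB where dB: "dB > 0" "\<And>q. q \<in> U \<Longrightarrow> dist q p < dB \<Longrightarrow> dist (B q) (B p) < \<epsilon>"
    using cB assms(3) e unfolding continuous_on_iff by metis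
  obtain r where r: "r > 0" "ball p r \<subseteq> U" using assms(1,3) open_contains_ball by blast
  define h where "h = min r (min dA dB) / 8"
  have h: "h > 0" "h < r / 2" "2 * h < dA" "2 * h < dB" "2 * h < r"
    using r dA dB unfolding h_def by auto
  obtain x y where xy: "0 < x" "x < h" "0 < y" "y < h"
    "F (p + h *\<^sub>R axis i 1 + h *\<^sub>R axis j 1) - F (p + h *\<^sub>R axis i 1) - F (p + h *\<^sub>R axis j 1) + F p
      = h * h * A (p + x *\<^sub>R axis i 1 + y *\<^sub>R axis j 1)"
    using double_mvt[OF assms(1,2) r(2) h(1,2), of i j] unfolding A_def by blast
  obtain x' y' where xy': "0 < x'" "x' < h" "0 < y'" "y' < h"
    "F (p + h *\<^sub>R axis j 1 + h *\<^sub>R axis i 1) - F (p + h *\<^sub>R axis j 1) - F (p + h *\<^sub>R axis i 1) + F p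
      = h * h * B (p + x' *\<^sub>R axis j 1 + y' *\<^sub>R axis i 1)"
    using double_mvt[OF assms(1,2) r(2) h(1,2), of j i] unfolding B_def by blast
  have pts: "p + h *\<^sub>R axis j 1 + h *\<^sub>R axis i 1 = p + h *\<^sub>R axis i 1 + h *\<^sub>R axis j 1"
    by (simp add: algebra_simps)
  have "h * h * A (p + x *\<^sub>R axis i 1 + y *\<^sub>R axis j 1) = h * h * B (p + x' *\<^sub>R axis j 1 + y' *\<^sub>R axis i 1)"
    using xy(5) xy'(5)[unfolded pts] by linarith
  then have eq: "A (p + x *\<^sub>R axis i 1 + y *\<^sub>R axis j 1) = B (p + x' *\<^sub>R axis j 1 + y' *\<^sub>R axis i 1)"
    using h(1) by simp
  have s1: "\<bar>x\<bar> + \<bar>y\<bar> < r" "\<bar>x'\<bar> + \<bar>y'\<bar> < r" using xy xy' h by auto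
  have a: "dist (A (p + x *\<^sub>R axis i 1 + y *\<^sub>R axis j 1)) (A p) < \<epsilon>"
    apply (rule dA(2)[OF near_pt(1)[OF r(2) s1(1)]])
    using near_pt(2)[OF r(2) s1(1), of i j] xy h by auto
  have b: "dist (B (p + x' *\<^sub>R axis j 1 + y' *\<^sub>R axis i 1)) (B p) < \<epsilon>"
    apply (rule dB(2)[OF near_pt(1)[OF r(2) s1(2)]])
    using near_pt(2)[OF r(2) s1(2), of j i] xy' h by auto
  have aux: "\<And>a b c d::real. \<bar>a - c\<bar> < \<bar>c - d\<bar> / 2 \<Longrightarrow> \<bar>b - d\<bar> < \<bar>c - d\<bar> / 2 \<Longrightarrow> a = b \<Longrightarrow> False"
    by (simp add: abs_if split: if_splits)
  show False using aux[OF a[unfolded \<epsilon>_def dist_real_def] b[unfolded \<epsilon>_def dist_real_def] eq] .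
qed

lemma ode_unique:
  fixes a a' k :: "real \<Rightarrow> real"
  assumes t0: "c < t0" "t0 < d"
    and da: "\<And>t. c < t \<Longrightarrow> t < d \<Longrightarrow> (a has_real_derivative a' t) (at t)"
    and da': "\<And>t. c < t \<Longrightarrow> t < d \<Longrightarrow> (a' has_real_derivative k t * a t) (at t)"
    and kb: "\<And>t. c < t \<Longrightarrow> t < d \<Longrightarrow> \<bar>k t\<bar> \<le> K"
    and z: "a t0 = 0" "a' t0 = 0"
    and t: "c < t" "t < d"
  shows "a t = 0"
proof -
  define M where "M = 1 + K"
  have M: "M \<ge> 1" using kb[OF t0] unfolding M_def by simp
  define E where "E = (\<lambda>t. (a t)\<^sup>2 + (a' t)\<^sup>2)"
  define E' where "E' = (\<lambda>t. 2 * a t * a' t * (1 + k t))"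
  have dE: "(E has_real_derivative E' s) (at s)" if "c < s" "s < d" for s
    unfolding E_def E'_def
    using da[OF that] da'[OF that]
    by (auto intro!: derivative_eq_intros simp: algebra_simps power2_eq_square)
  have bound: "\<bar>E' s\<bar> \<le> M * E s" if "c < s" "s < d" for s
  proof -
    have "\<bar>E' s\<bar> = 2 * \<bar>a s\<bar> * \<bar>a' s\<bar> * \<bar>1 + k s\<bar>" unfolding E'_def by (simp add: abs_mult)
    also have "\<dots> \<le> 2 * \<bar>a s\<bar> * \<bar>a' s\<bar> * M"
    proof -
      have "\<bar>1 + k s\<bar> \<le> M" using kb[OF that] unfolding M_def by linarith
      then show ?thesis by (intro mult_left_mono) auto
    qed
    also have "\<dots> \<le> E s * M"
    proof -
      have "2 * \<bar>a s\<bar> * \<bar>a' s\<bar> \<le> (a s)\<^sup>2 + (a' s)\<^sup>2"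
        using sum_squares_bound[of "\<bar>a s\<bar>" "\<bar>a' s\<bar>"] by simp
      then show ?thesis unfolding E_def using M by (intro mult_right_mono) auto
    qed
    finally show ?thesis by (simp add: mult.commute)
  qed
  have Enn: "E s \<ge> 0" for s unfolding E_def by simp
  have E0: "E t0 = 0" unfolding E_def using z by simp
  have contE: "continuous_on {x..y} E" if "c < x" "y < d" for x y
  proof (rule has_real_derivative_imp_continuous_on)
    fix s assume "s \<in> {x..y}"
    then show "(E has_real_derivative E' s) (at s)" using dE that by auto
  qed
  show ?thesis
  proof (cases "t0 \<le> t")
    case True
    define G where "G = (\<lambda>s. E s * exp (- M * s))"
    have "G t0 \<ge> G t"
    proof (rule DERIV_nonpos_imp_decreasing_open[OF True])
      fix x assume x: "t0 < x" "x < t"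
      then have xs: "c < x" "x < d" using t0 t by auto
      have "(G has_real_derivative E' x * exp (- M * x) + E x * (exp (- M * x) * (- M))) (at x)"
        unfolding G_def using dE[OF xs] by (auto intro!: derivative_eq_intros)
      moreover have "E' x * exp (- M * x) + E x * (exp (- M * x) * (- M)) \<le> 0"
      proof -
        have "E' x \<le> M * E x" using bound[OF xs] by linarith
        then have "(E' x - M * E x) * exp (- M * x) \<le> 0"
          by (intro mult_nonpos_nonneg) auto
        then show ?thesis by (simp add: algebra_simps)
      qed
      ultimately show "\<exists>y. (G has_real_derivative y) (at x) \<and> y \<le> 0" by blast
    next
      show "continuous_on {t0..t} G" unfolding G_def
        using contE[of t0 t] t0 t by (intro continuous_intros) auto
    qed
    then have "E t * exp (- M * t) \<le> 0" using E0 unfolding G_def by simp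
    then have "E t \<le> 0" by (simp add: mult_le_0_iff)
    then have "E t = 0" using Enn[of t] by simp
    then show ?thesis unfolding E_def by (simp add: add_nonneg_eq_0_iff)
  next
    case False
    then have le: "t \<le> t0" by simp
    define G where "G = (\<lambda>s. E s * exp (M * s))"
    have "G t \<le> G t0"
    proof (rule DERIV_nonneg_imp_increasing_open[OF le])
      fix x assume x: "t < x" "x < t0"
      then have xs: "c < x" "x < d" using t0 t by auto
      have "(G has_real_derivative E' x * exp (M * x) + E x * (exp (M * x) * M)) (at x)"
        unfolding G_def using dE[OF xs] by (auto intro!: derivative_eq_intros)
      moreover have "E' x * exp (M * x) + E x * (exp (M * x) * M) \<ge> 0"
      proof -
        have "- E' x \<le> M * E x" using bound[OF xs] by linarith
        then have "(E' x + M * E x) * exp (M * x) \<ge> 0"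
          by (intro mult_nonneg_nonneg) auto
        then show ?thesis by (simp add: algebra_simps)
      qed
      ultimately show "\<exists>y. (G has_real_derivative y) (at x) \<and> y \<ge> 0" by blast
    next
      show "continuous_on {t..t0} G" unfolding G_def
        using contE[of t t0] t0 t by (intro continuous_intros) auto
    qed
    then have "E t * exp (M * t) \<le> 0" using E0 unfolding G_def by simp
    then have "E t \<le> 0" by (simp add: mult_le_0_iff)
    then have "E t = 0" using Enn[of t] by simp
    then show ?thesis unfolding E_def by (simp add: add_nonneg_eq_0_iff)
  qed
qed

definition cube :: "real^4 \<Rightarrow> real \<Rightarrow> (real^4) set" where
  "cube p s = {q. \<forall>i. \<bar>q$i - p$i\<bar> < s}"

lemma cube_ball: assumes "4 * s \<le> r" shows "cube p s \<subseteq> ball p r"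
proof
  fix q assume q: "q \<in> cube p s"
  have "norm (q - p) \<le> (\<Sum>i\<in>UNIV. \<bar>(q - p)$i\<bar>)" by (rule norm_le_l1_cart)
  also have "\<dots> < 4 * s" using q unfolding cube_def sum_4 by (simp add: forall_4)
  finally show "q \<in> ball p r" using assms by (simp add: dist_norm norm_minus_commute)
qed

lemma ball_cube: "ball p s \<subseteq> cube p s"
proof
  fix q assume "q \<in> ball p s"
  then have "norm (q - p) < s" by (simp add: dist_norm norm_minus_commute)
  then show "q \<in> cube p s" unfolding cube_def using component_le_norm_cart[of "q - p"]
    by (auto intro: le_less_trans)
qed

lemma seg_const:
  assumes "\<And>\<tau>. \<bar>\<tau>\<bar> \<le> \<bar>t\<bar> \<Longrightarrow> \<tau> * t \<ge> 0 \<Longrightarrow> HP j G (q + \<tau> *\<^sub>R axis j 1) 0"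
  shows "G (q + t *\<^sub>R axis j 1) = G q"
proof (cases "t = 0")
  case True then show ?thesis by simp
next
  case False
  show ?thesis
  proof (cases "t > 0")
    case True
    obtain x where "G (q + t *\<^sub>R axis j 1) - G q = t * 0"
      using mvt_line[OF True, of j G q "\<lambda>_. 0"] assms by fastforce
    then show ?thesis by simp
  next
    case f: False
    then have tn: "-t > 0" using False by simp
    have "HP j G ((q + t *\<^sub>R axis j 1) + s *\<^sub>R axis j 1) 0" if "0 \<le> s" "s \<le> -t" for s
    proof -
      have "(q + t *\<^sub>R axis j 1) + s *\<^sub>R axis j 1 = q + (t + s) *\<^sub>R axis j 1" by (simp add: algebra_simps)
      moreover have "\<bar>t + s\<bar> \<le> \<bar>t\<bar>" using that f by auto
      moreover have "(t + s) * t \<ge> 0" using that f by (intro mult_nonpos_nonpos) auto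
      ultimately show ?thesis using assms by metis
    qed
    then obtain x where "G ((q + t *\<^sub>R axis j 1) + (-t) *\<^sub>R axis j 1) - G (q + t *\<^sub>R axis j 1) = (-t) * 0"
      using mvt_line[OF tn, of j G "q + t *\<^sub>R axis j 1" "\<lambda>_. 0"] by blast
    then show ?thesis by (simp add: algebra_simps)
  qed
qed

lemma cube_move:
  assumes "q \<in> cube p s" "\<bar>x - p$j\<bar> < s" "\<bar>\<tau>\<bar> \<le> \<bar>x - q$j\<bar>" "\<tau> * (x - q$j) \<ge> 0"
  shows "q + \<tau> *\<^sub>R axis j 1 \<in> cube p s"
proof -
  have qj: "\<bar>q$j - p$j\<bar> < s" using assms(1) unfolding cube_def by blast
  have "min (q$j) x \<le> q$j + \<tau> \<and> q$j + \<tau> \<le> max (q$j) x"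
  proof (cases "x - q$j \<ge> 0")
    case True
    then have "\<tau> \<ge> 0 \<or> x - q$j = 0" using assms(4) by (auto simp: zero_le_mult_iff)
    then show ?thesis using assms(3) True by auto
  next
    case False
    then have "\<tau> \<le> 0" using assms(4) by (auto simp: zero_le_mult_iff)
    then show ?thesis using assms(3) False by auto
  qed
  then have "\<bar>q$j + \<tau> - p$j\<bar> < s" using qj assms(2) by (auto simp: abs_less_iff)
  then show ?thesis using assms(1) unfolding cube_def by (auto simp: axis_def)
qed

lemma cube_step:
  assumes "q \<in> cube p s" "cube p s \<subseteq> U" "\<bar>x - p$j\<bar> < s" "\<And>y. y \<in> U \<Longrightarrow> HP j G y 0"
  shows "G (q + (x - q$j) *\<^sub>R axis j 1) = G q" "q + (x - q$j) *\<^sub>R axis j 1 \<in> cube p s"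
proof -
  show "G (q + (x - q$j) *\<^sub>R axis j 1) = G q"
  proof (rule seg_const)
    fix \<tau> assume "\<bar>\<tau>\<bar> \<le> \<bar>x - q$j\<bar>" "\<tau> * (x - q$j) \<ge> 0"
    then have "q + \<tau> *\<^sub>R axis j 1 \<in> cube p s" using cube_move assms(1,3) by blast
    then show "HP j G (q + \<tau> *\<^sub>R axis j 1) 0" using assms(2,4) by blast
  qed
  show "q + (x - q$j) *\<^sub>R axis j 1 \<in> cube p s" using cube_move[OF assms(1,3), of "x - q$j"] by simp
qed

definition lpt :: "real^4 \<Rightarrow> real \<Rightarrow> real^4" where
  "lpt p t = (p - (p$1) *\<^sub>R axis 1 1) + t *\<^sub>R axis 1 1"

lemma lpt_comp: "lpt p t $ 1 = t" "lpt p t $ 2 = p$2" "lpt p t $ 3 = p$3" "lpt p t $ 4 = p$4"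
  by (simp_all add: lpt_def axis_def)

lemma lpt_cube: "\<bar>t - p$1\<bar> < s \<Longrightarrow> s > 0 \<Longrightarrow> lpt p t \<in> cube p s"
  unfolding cube_def using exhaust_4 by (auto simp: forall_4 lpt_comp)

lemma flatten:
  assumes "q \<in> cube p s" "cube p s \<subseteq> U"
    "\<And>y. y \<in> U \<Longrightarrow> HP 2 G y 0" "\<And>y. y \<in> U \<Longrightarrow> HP 3 G y 0" "\<And>y. y \<in> U \<Longrightarrow> HP 4 G y 0"
  shows "G q = G (lpt p (q$1))"
proof -
  have "\<bar>q$1 - p$1\<bar> < s" using assms(1) unfolding cube_def by blast
  then have s: "s > 0" by linarith
  define q1 where "q1 = q + (p$2 - q$2) *\<^sub>R axis 2 1"
  define q2 where "q2 = q1 + (p$3 - q1$3) *\<^sub>R axis 3 1"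
  define q3 where "q3 = q2 + (p$4 - q2$4) *\<^sub>R axis 4 1"
  have 1: "G q1 = G q" "q1 \<in> cube p s" unfolding q1_def using cube_step[OF assms(1,2), of "p$2" 2] assms(3) s by auto
  have 2: "G q2 = G q1" "q2 \<in> cube p s" unfolding q2_def using cube_step[OF 1(2) assms(2), of "p$3" 3] assms(4) s by auto
  have 3: "G q3 = G q2" unfolding q3_def using cube_step[OF 2(2) assms(2), of "p$4" 4] assms(5) s by auto
  have "q3 = lpt p (q$1)"
    unfolding q3_def q2_def q1_def vec_eq_iff forall_4 lpt_comp by (simp add: axis_def)
  then show ?thesis using 1 2 3 by simp
qed

lemma cube_mono: "s \<le> s' \<Longrightarrow> cube p s \<subseteq> cube p s'"
  unfolding cube_def by (auto intro: less_le_trans)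

lemma local_step:
  assumes U: "open U" "p \<in> U"
    and h2: "\<And>q. q \<in> U \<Longrightarrow> HP 2 \<psi> q 0"
    and h3: "\<And>q. q \<in> U \<Longrightarrow> HP 3 \<psi> q 0"
    and h4: "\<And>q. q \<in> U \<Longrightarrow> HP 4 \<psi> q 0"
    and h1: "\<And>q. q \<in> U \<Longrightarrow> HP 1 \<psi> q (L q)"
    and hL: "\<And>q. q \<in> U \<Longrightarrow> HP 1 L q (k q * \<psi> q)"
    and ck: "continuous_on U k"
    and near: "\<And>\<epsilon>. \<epsilon> > 0 \<Longrightarrow> \<exists>z. dist z p < \<epsilon> \<and> (\<exists>\<delta>>0. \<forall>w\<in>ball z \<delta>. \<psi> w = 0)"
  shows "\<exists>\<epsilon>>0. \<forall>w\<in>ball p \<epsilon>. \<psi> w = 0"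
proof -
  obtain r where r: "r > 0" "ball p r \<subseteq> U" using U open_contains_ball by blast
  define s where "s = r / 4"
  have s: "s > 0" unfolding s_def using r by simp
  have cU: "cube p s \<subseteq> U" using cube_ball[of s r p] r unfolding s_def by auto
  define s' where "s' = s / 2"
  have s': "s' > 0" "s' < s" unfolding s'_def using s by auto
  define a where "a = (\<lambda>t. \<psi> (lpt p t))"
  define a' where "a' = (\<lambda>t. L (lpt p t))"
  define kk where "kk = (\<lambda>t. k (lpt p t))"
  have lU: "lpt p t \<in> U" if "\<bar>t - p$1\<bar> < s" for t using lpt_cube[OF that s] cU by blast
  have lpt_eq: "lpt p t = (p - (p$1) *\<^sub>R axis 1 1) + t *\<^sub>R axis 1 1" for t by (simp add: lpt_def)
  have da: "(a has_real_derivative a' t) (at t)" if "\<bar>t - p$1\<bar> < s" for t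
    unfolding a_def a'_def lpt_eq using HP_shift[OF h1[OF lU[OF that, unfolded lpt_eq]]] .
  have da': "(a' has_real_derivative kk t * a t) (at t)" if "\<bar>t - p$1\<bar> < s" for t
    unfolding a_def a'_def kk_def lpt_eq using HP_shift[OF hL[OF lU[OF that, unfolded lpt_eq]]] .
  have "continuous_on {p$1 - s'..p$1 + s'} kk"
  proof -
    have "continuous_on {p$1 - s'..p$1 + s'} (lpt p)" unfolding lpt_def by (intro continuous_intros)
    moreover have "lpt p ` {p$1 - s'..p$1 + s'} \<subseteq> U" using lU s' by (auto simp: abs_le_iff)
    ultimately show ?thesis unfolding kk_def using continuous_on_compose2[OF ck] by blast
  qed
  then have "compact (kk ` {p$1 - s'..p$1 + s'})" by (intro compact_continuous_image) auto
  then obtain K where K: "\<And>t. t \<in> {p$1 - s'..p$1 + s'} \<Longrightarrow> norm (kk t) \<le> K"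
    using compact_imp_bounded bounded_iff by (metis imageI)
  obtain z \<delta> where z: "dist z p < s'" "\<delta> > 0" "\<And>w. w \<in> ball z \<delta> \<Longrightarrow> \<psi> w = 0"
    using near[OF s'(1)] by blast
  have z1: "\<bar>z$1 - p$1\<bar> < s'" using component_le_norm_cart[of "z - p" 1] z(1)
    by (simp add: dist_norm)
  have zc: "z \<in> cube p s" using ball_cube[of p s'] cube_mono[of s' s p] z(1) s'
    by (auto simp: dist_commute)
  define \<rho> where "\<rho> = min \<delta> s'"
  have \<rho>: "\<rho> > 0" unfolding \<rho>_def using z s' by simp
  have azero: "a t = 0" if "\<bar>t - z$1\<bar> < \<rho>" for t
  proof -
    define w where "w = z + (t - z$1) *\<^sub>R axis 1 1"
    have "dist z w = \<bar>t - z$1\<bar>" unfolding w_def by (simp add: dist_norm)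
    then have "w \<in> ball z \<delta>" using that unfolding \<rho>_def by simp
    then have "\<psi> w = 0" using z(3) by blast
    moreover have "\<bar>t - p$1\<bar> < s"
    proof -
      have "\<bar>t - z$1\<bar> < s'" using that unfolding \<rho>_def by auto
      then show ?thesis using z1 unfolding s'_def abs_less_iff by linarith
    qed
    then have "w \<in> cube p s"
      unfolding w_def using cube_move[OF zc, of t 1 "t - z$1"] by auto
    moreover have "w$1 = t" unfolding w_def by (simp add: axis_def)
    ultimately show ?thesis using flatten[of w p s U \<psi>] cU h2 h3 h4 unfolding a_def by auto
  qed
  have a'z: "a' (z$1) = 0"
  proof -
    have "(a has_real_derivative a' (z$1)) (at (z$1))" using da z1 s' by auto
    moreover have "(a has_real_derivative 0) (at (z$1))"
    proof (rule has_field_derivative_transform_within_open[where S="ball (z$1) \<rho>"])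
      show "((\<lambda>t. 0) has_real_derivative 0) (at (z$1))" by simp
      show "\<And>x. x \<in> ball (z$1) \<rho> \<Longrightarrow> 0 = a x" using azero by (simp add: dist_real_def abs_minus_commute)
    qed (use \<rho> in auto)
    ultimately show ?thesis using DERIV_unique by blast
  qed
  have f1: "p$1 - s' < z$1" "z$1 < p$1 + s'" using z1 by auto
  have f3: "\<And>t. p$1 - s' < t \<Longrightarrow> t < p$1 + s' \<Longrightarrow> (a has_real_derivative a' t) (at t)"
    using da s' by (simp add: abs_less_iff)
  have f4: "\<And>t. p$1 - s' < t \<Longrightarrow> t < p$1 + s' \<Longrightarrow> (a' has_real_derivative kk t * a t) (at t)"
    using da' s' by (simp add: abs_less_iff)
  have f5: "\<And>t. p$1 - s' < t \<Longrightarrow> t < p$1 + s' \<Longrightarrow> \<bar>kk t\<bar> \<le> K"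
    using K by auto
  have f6: "a (z$1) = 0" using azero \<rho> by simp
  have aall: "a t = 0" if "\<bar>t - p$1\<bar> < s'" for t
  proof -
    have "p$1 - s' < t" "t < p$1 + s'" using that by auto
    then show ?thesis using ode_unique[OF f1 f3 f4 f5 f6 a'z] by blast
  qed
  show ?thesis
  proof (intro exI[of _ s'] conjI s'(1) ballI)
    fix w assume w: "w \<in> ball p s'"
    then have wc: "w \<in> cube p s" using ball_cube[of p s'] cube_mono[of s' s p] s' by auto
    have "\<bar>w$1 - p$1\<bar> < s'" using ball_cube[of p s'] w unfolding cube_def by blast
    then show "\<psi> w = 0" using flatten[OF wc cU, of \<psi>] h2 h3 h4 aall unfolding a_def by auto
  qed
qed

lemma ball_in_ball: "q \<in> ball p \<epsilon> \<Longrightarrow> ball q (\<epsilon> - dist p q) \<subseteq> ball p \<epsilon>"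
proof
  fix x assume "q \<in> ball p \<epsilon>" "x \<in> ball q (\<epsilon> - dist p q)"
  then have "dist p q + dist q x < \<epsilon>" by simp
  then show "x \<in> ball p \<epsilon>" using dist_triangle[of p x q] by simp
qed

lemma core:
  assumes U: "open U" "connected U" "p0 \<in> U"
    and p0: "\<exists>\<epsilon>>0. \<forall>w\<in>ball p0 \<epsilon>. \<psi> w = 0"
    and h2: "\<And>q. q \<in> U \<Longrightarrow> HP 2 \<psi> q 0"
    and h3: "\<And>q. q \<in> U \<Longrightarrow> HP 3 \<psi> q 0"
    and h4: "\<And>q. q \<in> U \<Longrightarrow> HP 4 \<psi> q 0"
    and h1: "\<And>q. q \<in> U \<Longrightarrow> HP 1 \<psi> q (L q)"
    and hL: "\<And>q. q \<in> U \<Longrightarrow> HP 1 L q (k q * \<psi> q)"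
    and ck: "continuous_on U k"
  shows "\<forall>q\<in>U. \<psi> q = 0"
proof -
  define Z where "Z = {p. \<exists>\<epsilon>>0. \<forall>w\<in>ball p \<epsilon>. \<psi> w = 0}"
  define B where "B = {p. \<exists>\<epsilon>>0. ball p \<epsilon> \<inter> Z = {}}"
  have oZ: "open Z" unfolding open_contains_ball
  proof
    fix p assume "p \<in> Z"
    then obtain \<epsilon> where e: "\<epsilon> > 0" "\<forall>w\<in>ball p \<epsilon>. \<psi> w = 0" unfolding Z_def by blast
    have "ball p \<epsilon> \<subseteq> Z"
    proof
      fix q assume q: "q \<in> ball p \<epsilon>"
      then have "\<epsilon> - dist p q > 0" by simp
      then show "q \<in> Z" unfolding Z_def using ball_in_ball[OF q] e(2) by blast
    qed
    then show "\<exists>e>0. ball p e \<subseteq> Z" using e(1) by blast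
  qed
  have oB: "open B" unfolding open_contains_ball
  proof
    fix p assume "p \<in> B"
    then obtain \<epsilon> where e: "\<epsilon> > 0" "ball p \<epsilon> \<inter> Z = {}" unfolding B_def by blast
    have "ball p \<epsilon> \<subseteq> B"
    proof
      fix q assume q: "q \<in> ball p \<epsilon>"
      then have "\<epsilon> - dist p q > 0" by simp
      then show "q \<in> B" unfolding B_def using ball_in_ball[OF q] e(2) by blast
    qed
    then show "\<exists>e>0. ball p e \<subseteq> B" using e(1) by blast
  qed
  have cov: "U \<subseteq> Z \<union> B"
  proof
    fix p assume pU: "p \<in> U"
    show "p \<in> Z \<union> B"
    proof (cases "p \<in> B")
      case False
      have near: "\<exists>z. dist z p < \<epsilon> \<and> (\<exists>\<delta>>0. \<forall>w\<in>ball z \<delta>. \<psi> w = 0)" if "\<epsilon> > 0" for \<epsilon>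
      proof -
        have "ball p \<epsilon> \<inter> Z \<noteq> {}" using False that unfolding B_def by blast
        then obtain z where "z \<in> ball p \<epsilon>" "z \<in> Z" by blast
        then show ?thesis unfolding Z_def by (auto simp: dist_commute)
      qed
      have "p \<in> Z" unfolding Z_def
        using local_step[OF U(1) pU h2 h3 h4 h1 hL ck near] by blast
      then show ?thesis by blast
    qed blast
  qed
  have disj: "Z \<inter> B \<inter> U = {}"
  proof (rule ccontr)
    assume "Z \<inter> B \<inter> U \<noteq> {}"
    then obtain p \<epsilon> where "p \<in> Z" "\<epsilon> > 0" "ball p \<epsilon> \<inter> Z = {}" unfolding B_def by blast
    moreover have "p \<in> ball p \<epsilon>" using \<open>\<epsilon> > 0\<close> by simp
    ultimately show False by blast
  qed
  have ne: "Z \<inter> U \<noteq> {}" using p0 U(3) unfolding Z_def by blast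
  have "B \<inter> U = {}"
    using U(2) oZ oB cov disj ne unfolding connected_def by blast
  then have "U \<subseteq> Z" using cov by blast
  then show ?thesis unfolding Z_def by fastforce
qed

lemma HP_ef: "HP i f q Df \<Longrightarrow> HP i G q DG \<Longrightarrow>
  HP i (\<lambda>p. exp (c * f p) * G p) q (exp (c * f q) * (DG + c * Df * G q))"
  unfolding HP_def by (auto intro!: derivative_eq_intros simp: algebra_simps)

lemma HP_cXY: "HP i X q DX \<Longrightarrow> HP i Y q DY \<Longrightarrow>
  HP i (\<lambda>p. c * X p * Y p) q (c * (DX * Y q + X q * DY))"
  unfolding HP_def by (auto intro!: derivative_eq_intros simp: algebra_simps)

theorem lemma3p3:
  fixes U :: "(real^4) set" and H :: "real \<Rightarrow> real \<Rightarrow> real \<Rightarrow> real"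
    and f :: "real^4 \<Rightarrow> real" and \<mu> :: real
  assumes "open U" and "connected U" and "U \<noteq> {}"
    and "smooth_on U (\<lambda>p. H (p$1) (p$3) (p$4))"
    and "\<exists>p\<in>U. \<exists>i j k l. weyl (ppwave H) i j k l p \<noteq> 0"
    and "smooth_on U f"
    and "quasi_einstein U (ppwave H) f \<mu>"
  shows "\<forall>p\<in>U. pd 2 f p = 0"
proof -
  have Hs: "smooth_on U (Hf H)" using assms(4) unfolding Hf_def .
  have fS: "smooth_on U f" by (rule assms(6))
  obtain lam where lamS: "smooth_on U lam" and QE:
    "\<And>p i j. p \<in> U \<Longrightarrow> hes (ppwave H) f i j p + ricci (ppwave H) i j p - \<mu> * pd i f p * pd j f p = lam p * ppwave H i j p"
    using assms(7) unfolding quasi_einstein_def by blast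
  have HPH: "HP a (pd m (Hf H)) p (pd a (pd m (Hf H)) p)" if "p \<in> U" for a m p
    using smooth_HP[OF smooth_pd[OF Hs] that] .
  have H2z: "pd 2 (pd m (Hf H)) p = 0" for m p using I2_pd2[OF I2_pd[OF I2_Hf]] .
  have ric0: "ricci (ppwave H) i j p = 0" if "p \<in> U" "\<not> (i = 1 \<and> j = 1)" for i j p
  proof -
    have "ricci (ppwave H) i j p = ricE (\<lambda>m. pd m (Hf H) p) (\<lambda>a m. pd a (pd m (Hf H)) p) i j"
      unfolding ricci_def ricE_def riem_pp[OF HPH[OF that(1)]] ..
    also have "\<dots> = 0" using that(2) ricE_val[of "\<lambda>a m. pd a (pd m (Hf H)) p"] H2z by auto
    finally show ?thesis .
  qed
  have EQ: "pd i (pd j f) p - (\<Sum>k\<in>UNIV. (\<Sum>m\<in>UNIV. cf k i j m * pd m (Hf H) p) * pd k f p)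
      - \<mu> * pd i f p * pd j f p = lam p * ppwave H i j p" if "p \<in> U" "\<not> (i = 1 \<and> j = 1)" for i j p
    using QE[OF that(1), of i j] ric0[OF that] unfolding hes_def chr_pp by simp
  have E22: "pd 2 (pd 2 f) p - \<mu> * pd 2 f p * pd 2 f p = 0" if "p \<in> U" for p
    using EQ[OF that, of 2 2] by (simp add: sum_4 cf_def ppwave_def)
  have E32: "pd 3 (pd 2 f) p - \<mu> * pd 3 f p * pd 2 f p = 0" if "p \<in> U" for p
    using EQ[OF that, of 3 2] by (simp add: sum_4 cf_def ppwave_def)
  have E42: "pd 4 (pd 2 f) p - \<mu> * pd 4 f p * pd 2 f p = 0" if "p \<in> U" for p
    using EQ[OF that, of 4 2] by (simp add: sum_4 cf_def ppwave_def)
  have E12: "pd 1 (pd 2 f) p - \<mu> * pd 1 f p * pd 2 f p = lam p" if "p \<in> U" for p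
    using EQ[OF that, of 1 2] by (simp add: sum_4 cf_def ppwave_def)
  have E33: "pd 3 (pd 3 f) p - \<mu> * pd 3 f p * pd 3 f p = lam p" if "p \<in> U" for p
    using EQ[OF that, of 3 3] by (simp add: sum_4 cf_def ppwave_def)
  have E44: "pd 4 (pd 4 f) p - \<mu> * pd 4 f p * pd 4 f p = lam p" if "p \<in> U" for p
    using EQ[OF that, of 4 4] by (simp add: sum_4 cf_def ppwave_def)
  have E43: "pd 4 (pd 3 f) p - \<mu> * pd 4 f p * pd 3 f p = 0" if "p \<in> U" for p
    using EQ[OF that, of 4 3] by (simp add: sum_4 cf_def ppwave_def)
  have E13: "pd 1 (pd 3 f) p - \<mu> * pd 1 f p * pd 3 f p = 1/2 * pd 3 (Hf H) p * pd 2 f p" if "p \<in> U" for p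
    using EQ[OF that, of 1 3] by (simp add: sum_4 cf_def ppwave_def)
  have E14: "pd 1 (pd 4 f) p - \<mu> * pd 1 f p * pd 4 f p = 1/2 * pd 4 (Hf H) p * pd 2 f p" if "p \<in> U" for p
    using EQ[OF that, of 1 4] by (simp add: sum_4 cf_def ppwave_def)
  define \<psi> where "\<psi> = (\<lambda>p. exp (- \<mu> * f p) * pd 2 f p)"
  define L where "L = (\<lambda>p. exp (- \<mu> * f p) * lam p)"
  define r3 where "r3 = (\<lambda>p. exp (- \<mu> * f p) * pd 3 f p)"
  define r4 where "r4 = (\<lambda>p. exp (- \<mu> * f p) * pd 4 f p)"
  have eS: "(\<lambda>p. exp (- \<mu> * f p)) \<in> sm U" by (intro sm_exp sm_mult sm_const sm_base fS)
  have LS: "smooth_on U L" unfolding L_def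
    by (rule sm_smooth[OF assms(1)]) (intro sm_mult eS sm_base lamS)
  have r3S: "smooth_on U r3" unfolding r3_def
    by (rule sm_smooth[OF assms(1)]) (intro sm_mult eS sm_base smooth_pd fS)
  have r4S: "smooth_on U r4" unfolding r4_def
    by (rule sm_smooth[OF assms(1)]) (intro sm_mult eS sm_base smooth_pd fS)
  have hf: "HP i f p (pd i f p)" if "p \<in> U" for i p using smooth_HP[OF fS that] .
  have hff: "HP i (pd j f) p (pd i (pd j f) p)" if "p \<in> U" for i j p using smooth_HP[OF smooth_pd[OF fS] that] .
  have hpsi: "HP i \<psi> p (exp (- \<mu> * f p) * (pd i (pd 2 f) p - \<mu> * pd i f p * pd 2 f p))" if "p \<in> U" for i p
    unfolding \<psi>_def using HP_ef[OF hf[OF that] hff[OF that], where c="- \<mu>"] by simp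
  have hr3: "HP i r3 p (exp (- \<mu> * f p) * (pd i (pd 3 f) p - \<mu> * pd i f p * pd 3 f p))" if "p \<in> U" for i p
    unfolding r3_def using HP_ef[OF hf[OF that] hff[OF that], where c="- \<mu>"] by simp
  have hr4: "HP i r4 p (exp (- \<mu> * f p) * (pd i (pd 4 f) p - \<mu> * pd i f p * pd 4 f p))" if "p \<in> U" for i p
    unfolding r4_def using HP_ef[OF hf[OF that] hff[OF that], where c="- \<mu>"] by simp
  have h2: "HP 2 \<psi> p 0" if "p \<in> U" for p using hpsi[OF that, of 2] E22[OF that] by simp
  have h3: "HP 3 \<psi> p 0" if "p \<in> U" for p using hpsi[OF that, of 3] E32[OF that] by simp
  have h4: "HP 4 \<psi> p 0" if "p \<in> U" for p using hpsi[OF that, of 4] E42[OF that] by simp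
  have h1: "HP 1 \<psi> p (L p)" if "p \<in> U" for p using hpsi[OF that, of 1] E12[OF that] by (simp add: L_def)
  have r33: "HP 3 r3 p (L p)" if "p \<in> U" for p using hr3[OF that, of 3] E33[OF that] by (simp add: L_def)
  have r44: "HP 4 r4 p (L p)" if "p \<in> U" for p using hr4[OF that, of 4] E44[OF that] by (simp add: L_def)
  have r43: "HP 4 r3 p 0" if "p \<in> U" for p using hr3[OF that, of 4] E43[OF that] by simp
  have r31: "HP 1 r3 p (1/2 * pd 3 (Hf H) p * \<psi> p)" if "p \<in> U" for p
    using hr3[OF that, of 1] unfolding E13[OF that] \<psi>_def by (simp add: algebra_simps)
  have r41: "HP 1 r4 p (1/2 * pd 4 (Hf H) p * \<psi> p)" if "p \<in> U" for p
    using hr4[OF that, of 1] unfolding E14[OF that] \<psi>_def by (simp add: algebra_simps)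
  have hH: "HP a (Hf H) p (pd a (Hf H) p)" if "p \<in> U" for a p using smooth_HP[OF Hs that] .
  have L1a: "pd 1 L p = 1/2 * pd 3 (pd 3 (Hf H)) p * \<psi> p" if "p \<in> U" for p
  proof -
    have "pd 1 L p = pd 1 (pd 3 r3) p"
      using pd_local[OF assms(1) that, of L "pd 3 r3"] HP_pd[OF r33] by simp
    also have "\<dots> = pd 3 (pd 1 r3) p" using clairaut[OF assms(1) r3S that] by simp
    also have "\<dots> = pd 3 (\<lambda>q. 1/2 * pd 3 (Hf H) q * \<psi> q) p"
      using pd_local[OF assms(1) that, of "pd 1 r3" "\<lambda>q. 1/2 * pd 3 (Hf H) q * \<psi> q"] HP_pd[OF r31] by simp
    also have "\<dots> = 1/2 * pd 3 (pd 3 (Hf H)) p * \<psi> p"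
      using HP_pd[OF HP_cXY[OF HPH[OF that] h3[OF that], of "1/2"]] by simp
    finally show ?thesis .
  qed
  have L1b: "pd 1 L p = 1/2 * pd 4 (pd 4 (Hf H)) p * \<psi> p" if "p \<in> U" for p
  proof -
    have "pd 1 L p = pd 1 (pd 4 r4) p"
      using pd_local[OF assms(1) that, of L "pd 4 r4"] HP_pd[OF r44] by simp
    also have "\<dots> = pd 4 (pd 1 r4) p" using clairaut[OF assms(1) r4S that] by simp
    also have "\<dots> = pd 4 (\<lambda>q. 1/2 * pd 4 (Hf H) q * \<psi> q) p"
      using pd_local[OF assms(1) that, of "pd 1 r4" "\<lambda>q. 1/2 * pd 4 (Hf H) q * \<psi> q"] HP_pd[OF r41] by simp
    also have "\<dots> = 1/2 * pd 4 (pd 4 (Hf H)) p * \<psi> p"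
      using HP_pd[OF HP_cXY[OF HPH[OF that] h4[OF that], of "1/2"]] by simp
    finally show ?thesis .
  qed
  have L0: "1/2 * pd 4 (pd 3 (Hf H)) p * \<psi> p = 0" if "p \<in> U" for p
  proof -
    have "0 = pd 1 (\<lambda>q. 0) p" by (simp add: pd_const)
    also have "\<dots> = pd 1 (pd 4 r3) p"
      using pd_local[OF assms(1) that, of "\<lambda>q. 0" "pd 4 r3"] HP_pd[OF r43] by simp
    also have "\<dots> = pd 4 (pd 1 r3) p" using clairaut[OF assms(1) r3S that] by simp
    also have "\<dots> = pd 4 (\<lambda>q. 1/2 * pd 3 (Hf H) q * \<psi> q) p"
      using pd_local[OF assms(1) that, of "pd 1 r3" "\<lambda>q. 1/2 * pd 3 (Hf H) q * \<psi> q"] HP_pd[OF r31] by simp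
    also have "\<dots> = 1/2 * pd 4 (pd 3 (Hf H)) p * \<psi> p"
      using HP_pd[OF HP_cXY[OF HPH[OF that] h4[OF that], of "1/2"]] by simp
    finally show ?thesis by simp
  qed
  have hL: "HP 1 L p (1/2 * pd 3 (pd 3 (Hf H)) p * \<psi> p)" if "p \<in> U" for p
    using smooth_HP[OF LS that, of 1] L1a[OF that] by simp
  define \<phi> where "\<phi> = (\<lambda>q. (pd 3 (pd 3 (Hf H)) q - pd 4 (pd 4 (Hf H)) q)\<^sup>2 + (pd 4 (pd 3 (Hf H)) q)\<^sup>2)"
  have key: "\<psi> q = 0" if "q \<in> U" "\<phi> q > 0" for q
  proof (rule ccontr)
    assume "\<psi> q \<noteq> 0"
    then have "pd 3 (pd 3 (Hf H)) q = pd 4 (pd 4 (Hf H)) q" "pd 4 (pd 3 (Hf H)) q = 0"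
      using L1a[OF that(1)] L1b[OF that(1)] L0[OF that(1)] by auto
    then show False using that(2) unfolding \<phi>_def by simp
  qed
  have cH2: "continuous_on U (pd a (pd b (Hf H)))" for a b
    using smooth_cont[OF smooth_pd[OF smooth_pd[OF Hs]]] .
  have cphi: "continuous_on U \<phi>" unfolding \<phi>_def by (intro continuous_intros cH2)
  obtain p0 i j k l where p0: "p0 \<in> U" "weyl (ppwave H) i j k l p0 \<noteq> 0" using assms(5) by blast
  have "\<phi> p0 > 0"
  proof (rule ccontr)
    assume "\<not> \<phi> p0 > 0"
    moreover have "\<phi> p0 \<ge> 0" unfolding \<phi>_def by simp
    ultimately have "\<phi> p0 = 0" by simp
    then have "pd 3 (pd 3 (Hf H)) p0 - pd 4 (pd 4 (Hf H)) p0 = 0 \<and> pd 4 (pd 3 (Hf H)) p0 = 0"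
      unfolding \<phi>_def using sum_power2_eq_zero_iff by blast
    then have a: "pd 3 (pd 3 (Hf H)) p0 = pd 4 (pd 4 (Hf H)) p0" "pd 4 (pd 3 (Hf H)) p0 = 0"
      by simp_all
    have sym: "\<And>a b. pd a (pd b (Hf H)) p0 = pd b (pd a (Hf H)) p0" using clairaut[OF assms(1) Hs p0(1)] by blast
    have "pd 3 (pd 4 (Hf H)) p0 = 0" using a(2) sym by metis
    then have "weE (Hf H p0) (\<lambda>m. pd m (Hf H) p0) (\<lambda>a m. pd a (pd m (Hf H)) p0) i j k l = 0"
      by (intro weE_zero H2z sym a(1))
    then show False using p0(2) weyl_pp[OF HPH[OF p0(1)]] by simp
  qed
  have "open (U \<inter> \<phi> -` {0<..})" by (rule continuous_open_preimage[OF cphi assms(1)]) auto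
  then obtain \<epsilon> where e: "\<epsilon> > 0" "ball p0 \<epsilon> \<subseteq> U \<inter> \<phi> -` {0<..}"
    using p0(1) \<open>\<phi> p0 > 0\<close> open_contains_ball by blast
  have p0z: "\<exists>\<epsilon>>0. \<forall>w\<in>ball p0 \<epsilon>. \<psi> w = 0" using e key by (intro exI[of _ \<epsilon>]) auto
  have ck: "continuous_on U (\<lambda>q. 1/2 * pd 3 (pd 3 (Hf H)) q)"
    by (intro continuous_on_mult continuous_on_const cH2)
  have allz: "\<forall>q\<in>U. \<psi> q = 0"
    using core[OF assms(1,2) p0(1) p0z, of L "\<lambda>q. 1/2 * pd 3 (pd 3 (Hf H)) q"] h2 h3 h4 h1 hL ck by simp
  show ?thesis using allz unfolding \<psi>_def by simp
qed

end
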